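(* Let $G$ be a locally compact Abelian group and $(G, \mathbb{R}^d \times H_1, \mathcal{L})$ a cut and project scheme. Let $\phi \in \mathcal{S}(\mathbb{R}^d)$, $\psi \in C_c(H_1)$ and $h=\phi \otimes \psi$. Then the measure $\omega_h=\sum_{(x,x^\star)\in\mathcal L}h(x^\star)\delta_x$ is norm almost periodic.
   Context: Cut and project scheme $(G,H,\mathcal L)$: $\mathcal L\subseteq G\times H$ a lattice with $\pi_H(\mathcal L)$ dense and $\pi_G|_{\mathcal L}$ injective; $\mathcal L=\{(x,x^\star):x\in\pi_G(\mathcal L)\}$. $\mathcal S(\mathbb R^d)$ is the Schwartz space; $(\phi\otimes\psi)(x,y)=\phi(x)\psi(y)$. $\|\mu\|_K=\sup_t|\mu|(t+K)$; $T_t\mu$ is the translate of $\mu$ by $t$. A measure $\mu$ is norm almost periodic if for each $\epsilon>0$ the set $\{t\in G:\|T_t\mu-\mu\|_K<\epsilon\}$ is relatively dense (i.e. $P+C=G$ for some compact $C$), for a fixed compact $K$ with non-empty interior (independent of the choice of $K$). *)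

theory Defs
  imports "HOL-Analysis.Analysis"
begin

text \<open>The group H is given as a type that
  only needs a topology and an addition; for the product type of the theorem
  these are the product topology and the componentwise addition.\<close>
definition cut_and_project ::
  "('g::topological_ab_group_add \<times> 'k::{topological_space, ab_group_add}) set \<Rightarrow> bool" where
  "cut_and_project L \<longleftrightarrow>
     0 \<in> L \<and> (\<forall>x\<in>L. \<forall>y\<in>L. x - y \<in> L) \<and>
     (\<exists>U. open U \<and> (0::'g\<times>'k) \<in> U \<and> L \<inter> U = {0}) \<and>
     (\<exists>C. compact C \<and> (\<Union>l\<in>L. (\<lambda>c. l + c) ` C) = UNIV) \<and>
     closure (snd ` L) = UNIV \<and>
     inj_on fst L"

definition star_map :: "('g \<times> 'k) set \<Rightarrow> 'g \<Rightarrow> 'k" where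
  "star_map L x = (THE y. (x, y) \<in> L)"

fun iter_deriv :: "'e::euclidean_space list \<Rightarrow> ('e \<Rightarrow> complex) \<Rightarrow> 'e \<Rightarrow> complex" where
  "iter_deriv [] f = f"
| "iter_deriv (v # vs) f = (\<lambda>x. frechet_derivative (iter_deriv vs f) (at x) v)"

definition schwartz :: "('e::euclidean_space \<Rightarrow> complex) \<Rightarrow> bool" where
  "schwartz f \<longleftrightarrow>
     (\<forall>vs. set vs \<subseteq> Basis \<longrightarrow> (\<forall>x. iter_deriv vs f differentiable (at x))) \<and>
     (\<forall>vs (n::nat). set vs \<subseteq> Basis \<longrightarrow>
        bounded (range (\<lambda>x. (1 + norm x) ^ n * norm (iter_deriv vs f x))))"

definition Cc :: "('h::topological_space \<Rightarrow> complex) \<Rightarrow> bool" where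
  "Cc f \<longleftrightarrow> continuous_on UNIV f \<and> compact (closure {x. f x \<noteq> 0})"

text \<open>A pure point measure sum_x c(x) delta_x on G is represented by its
  coefficient function c. Its total variation measure is |mu|(A) = sum_{x in A} |c x|.\<close>
definition pp_variation :: "('g \<Rightarrow> complex) \<Rightarrow> 'g set \<Rightarrow> ennreal" where
  "pp_variation c A = (\<Sum>\<^sub>\<infinity>x\<in>A. ennreal (norm (c x)))"

definition pp_Knorm :: "'g::ab_group_add set \<Rightarrow> ('g \<Rightarrow> complex) \<Rightarrow> ennreal" where
  "pp_Knorm K c = (SUP t. pp_variation c ((\<lambda>k. t + k) ` K))"

text \<open>Translate T_t of sum c(x) delta_x is sum c(x) delta_{x+t}.\<close>
definition pp_translate :: "'g::ab_group_add \<Rightarrow> ('g \<Rightarrow> complex) \<Rightarrow> 'g \<Rightarrow> complex" where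
  "pp_translate t c = (\<lambda>y. c (y - t))"

definition relatively_dense :: "'g::{topological_space, ab_group_add} set \<Rightarrow> bool" where
  "relatively_dense P \<longleftrightarrow> (\<exists>C. compact C \<and> (\<Union>p\<in>P. (\<lambda>c. p + c) ` C) = UNIV)"

text \<open>Norm almost periodicity (the notion is independent of the compact K with
  non-empty interior; we require it for every such K).\<close>
definition norm_almost_periodic :: "('g::{topological_space, ab_group_add} \<Rightarrow> complex) \<Rightarrow> bool" where
  "norm_almost_periodic c \<longleftrightarrow>
     (\<forall>K. compact K \<and> interior K \<noteq> {} \<longrightarrow>
        (\<forall>\<epsilon>>0. relatively_dense
           {t. pp_Knorm K (\<lambda>y. pp_translate t c y - c y) < ennreal \<epsilon>}))"

definition omega :: "('g \<times> 'k) set \<Rightarrow> ('k \<Rightarrow> complex) \<Rightarrow> 'g \<Rightarrow> complex" where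
  "omega L h = (\<lambda>x. if x \<in> fst ` L then h (star_map L x) else 0)"

end

theory Submission
  imports Defs
begin

lemma open_vimage_UNIV:
  assumes "continuous_on UNIV f" "open S"
  shows "open (f -` S)"
  using assms continuous_on_open_vimage[of UNIV f] by simp

lemma small_diff_nbhd:
  fixes U :: "'a::{topological_space, ab_group_add} set"
  assumes cont: "continuous_on UNIV (\<lambda>z::'a\<times>'a. fst z - snd z)"
    and U: "open U" "0 \<in> U"
  obtains V where "open V" "0 \<in> V" "\<And>v w. v \<in> V \<Longrightarrow> w \<in> V \<Longrightarrow> v - w \<in> U"
proof -
  have "open ((\<lambda>z::'a\<times>'a. fst z - snd z) -` U)"
    using cont U(1) by (metis continuous_on_open_vimage open_UNIV Int_UNIV_right)
  moreover have "(0,0) \<in> (\<lambda>z::'a\<times>'a. fst z - snd z) -` U" using U(2) by simp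
  ultimately obtain A B where AB: "open A" "open B" "(0,0) \<in> A \<times> B" "A \<times> B \<subseteq> (\<lambda>z::'a\<times>'a. fst z - snd z) -` U"
    by (rule open_prod_elim)
  show ?thesis
  proof (rule that[of "A \<inter> B"])
    show "open (A \<inter> B)" using AB by auto
    show "0 \<in> A \<inter> B" using AB by auto
    fix v w assume "v \<in> A \<inter> B" "w \<in> A \<inter> B"
    then have "(v, w) \<in> A \<times> B" by auto
    then show "v - w \<in> U" using AB(4) by auto
  qed
qed

lemma translate_open:
  fixes V :: "'a::{topological_space, ab_group_add} set"
  assumes cont: "continuous_on UNIV (\<lambda>z::'a\<times>'a. fst z - snd z)"
    and V: "open V"
  shows "open ((+) q ` V)"
proof -
  have c: "continuous_on UNIV (\<lambda>y::'a. y - q)"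
  proof -
    have "continuous_on UNIV ((\<lambda>z::'a\<times>'a. fst z - snd z) \<circ> (\<lambda>y. (y, q)))"
      by (rule continuous_on_compose) (auto intro!: continuous_intros cont[THEN continuous_on_subset])
    then show ?thesis by (simp add: o_def)
  qed
  have "(+) q ` V = (\<lambda>y. y - q) -` V"
    by (auto simp: image_iff algebra_simps) (metis add.commute diff_add_cancel)
  then show ?thesis using c V by (metis continuous_on_open_vimage open_UNIV Int_UNIV_right)
qed

lemma uniform_finite:
  fixes L :: "'a::{topological_space, ab_group_add} set"
  assumes cont: "continuous_on UNIV (\<lambda>z::'a\<times>'a. fst z - snd z)"
    and sub: "\<And>x y. x \<in> L \<Longrightarrow> y \<in> L \<Longrightarrow> x - y \<in> L"
    and U: "open U" "0 \<in> U" "L \<inter> U = {0}"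
    and Q: "compact Q"
  obtains M where "\<And>x. finite (L \<inter> (+) x ` Q) \<and> card (L \<inter> (+) x ` Q) \<le> M"
proof -
  obtain V where V: "open V" "0 \<in> V" "\<And>v w. v \<in> V \<Longrightarrow> w \<in> V \<Longrightarrow> v - w \<in> U"
    using small_diff_nbhd[OF cont U(1,2)] by blast
  have cov: "Q \<subseteq> (\<Union>q\<in>Q. (+) q ` V)"
  proof
    fix p assume "p \<in> Q"
    moreover have "p \<in> (+) p ` V" using V(2) by (rule rev_image_eqI) simp
    ultimately show "p \<in> (\<Union>q\<in>Q. (+) q ` V)" by blast
  qed
  obtain Qf where Qf: "Qf \<subseteq> Q" "finite Qf" "Q \<subseteq> (\<Union>q\<in>Qf. (+) q ` V)"
    by (rule compactE_image[OF Q _ cov]) (rule translate_open[OF cont V(1)])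
  show ?thesis
  proof (rule that[of "card Qf"])
    fix x
    define A where "A = L \<inter> (+) x ` Q"
    have ex: "\<exists>q\<in>Qf. l - x - q \<in> V" if lA: "l \<in> A" for l
    proof -
      obtain p where p: "p \<in> Q" "l = x + p" using lA unfolding A_def by blast
      then obtain q v where qv: "q \<in> Qf" "v \<in> V" "p = q + v" using Qf(3) by blast
      then have "l - x - q = v" using p by simp
      then show ?thesis using qv by auto
    qed
    define g where "g l = (SOME q. q \<in> Qf \<and> l - x - q \<in> V)" for l
    have g: "g l \<in> Qf \<and> l - x - g l \<in> V" if "l \<in> A" for l
      using someI_ex[OF ex[OF that, unfolded Bex_def]] by (simp add: g_def)
    have inj: "inj_on g A"
    proof (rule inj_onI)
      fix l l' assume l: "l \<in> A" "l' \<in> A" "g l = g l'"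
      have "(l - x - g l) - (l' - x - g l') \<in> U" by (rule V(3)[OF conjunct2[OF g[OF l(1)]] conjunct2[OF g[OF l(2)]]])
      moreover have "(l - x - g l) - (l' - x - g l') = l - l'" using l(3) by (simp add: algebra_simps)
      moreover have "l - l' \<in> L" using l sub by (auto simp: A_def)
      ultimately have "l - l' \<in> L \<inter> U" by simp
      then have "l - l' = 0" using U(3) by simp
      then show "l = l'" by simp
    qed
    have im: "g ` A \<subseteq> Qf" using g by auto
    have "finite A" by (rule finite_imageD[OF finite_subset[OF im Qf(2)] inj])
    moreover have "card A \<le> card Qf" using card_inj_on_le[OF inj im Qf(2)] .
    ultimately show "finite (L \<inter> (+) x ` Q) \<and> card (L \<inter> (+) x ` Q) \<le> card Qf" by (simp add: A_def)
  qed
qed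

lemma diff_cont: "continuous_on UNIV (\<lambda>z::'a::topological_group_add\<times>'a. fst z - snd z)"
  by (intro continuous_intros)

lemma unif_cont_Cc:
  fixes \<psi> :: "'h::topological_ab_group_add \<Rightarrow> complex"
  assumes Cc: "Cc \<psi>" and eta: "\<eta> > 0"
  obtains V where "open V" "0 \<in> V" "\<And>b z. b \<in> V \<Longrightarrow> norm (\<psi> (z - b) - \<psi> z) < \<eta>"
proof -
  define T where "T = closure {x. \<psi> x \<noteq> 0}"
  have cT: "compact T" and contpsi: "continuous_on UNIV \<psi>" using Cc unfolding Cc_def T_def by simp_all
  have suppT: "{x. \<psi> x \<noteq> 0} \<subseteq> T" unfolding T_def by (rule closure_subset)
  have supp: "\<psi> x = 0" if "x \<notin> T" for x using that suppT by auto
  define Ob where "Ob z = {w. norm (\<psi> (z + w) - \<psi> z) < \<eta>/2}" for z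
  have oOb: "open (Ob z)" for z
  proof -
    have "continuous_on UNIV (\<lambda>w. \<psi> (z + w))"
      by (rule continuous_on_compose2[OF contpsi]) (auto intro!: continuous_intros)
    then have "continuous_on UNIV (\<lambda>w. norm (\<psi> (z + w) - \<psi> z))" by (intro continuous_intros)
    then show ?thesis unfolding Ob_def by (intro open_Collect_less) (auto intro: continuous_intros)
  qed
  have zOb: "0 \<in> Ob z" for z using eta by (simp add: Ob_def)
  have "\<exists>V. open V \<and> 0 \<in> V \<and> (\<forall>v\<in>V. \<forall>w\<in>V. v - w \<in> Ob z)" for z
  proof -
    obtain V where "open V" "0 \<in> V" "\<And>v w. v \<in> V \<Longrightarrow> w \<in> V \<Longrightarrow> v - w \<in> Ob z"
      using small_diff_nbhd[OF diff_cont oOb zOb] by blast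
    then show ?thesis by blast
  qed
  then have "\<forall>z. \<exists>V. open V \<and> 0 \<in> V \<and> (\<forall>v\<in>V. \<forall>w\<in>V. v - w \<in> Ob z)" by (rule allI)
  from choice[OF this] obtain Vf where Vf0: "\<forall>z. open (Vf z) \<and> 0 \<in> Vf z \<and> (\<forall>v\<in>Vf z. \<forall>w\<in>Vf z. v - w \<in> Ob z)"
    by (rule exE)
  have Vf: "\<And>z. open (Vf z)" "\<And>z. 0 \<in> Vf z" "\<And>z v w. v \<in> Vf z \<Longrightarrow> w \<in> Vf z \<Longrightarrow> v - w \<in> Ob z"
    using Vf0 by simp_all
  have cov: "T \<subseteq> (\<Union>z\<in>T. (+) z ` Vf z)"
  proof
    fix p assume "p \<in> T"
    moreover have "p \<in> (+) p ` Vf p" using Vf(2) by (rule rev_image_eqI) simp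
    ultimately show "p \<in> (\<Union>z\<in>T. (+) z ` Vf z)" by blast
  qed
  obtain Tf where Tf: "Tf \<subseteq> T" "finite Tf" "T \<subseteq> (\<Union>z\<in>Tf. (+) z ` Vf z)"
    by (rule compactE_image[OF cT _ cov]) (rule translate_open[OF diff_cont Vf(1)])
  define V0 where "V0 = (\<Inter>z\<in>Tf. Vf z)"
  have oV0: "open V0" unfolding V0_def using Tf(2) Vf(1) by auto
  have key: "norm (\<psi> (y - c) - \<psi> y) < \<eta>" if y: "y \<in> T" and c: "c \<in> V0" for y c
  proof -
    obtain z where z: "z \<in> Tf" "y \<in> (+) z ` Vf z" using y Tf(3) by auto
    then obtain v where v: "v \<in> Vf z" "y = z + v" by auto
    have cz: "c \<in> Vf z" using c z(1) unfolding V0_def by auto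
    have "v - c \<in> Ob z" by (rule Vf(3)[OF v(1) cz])
    then have 0: "norm (\<psi> (z + (v - c)) - \<psi> z) < \<eta>/2" unfolding Ob_def by simp
    have e: "y - c = z + (v - c)" using v by (simp add: algebra_simps)
    have 1: "norm (\<psi> (y - c) - \<psi> z) < \<eta>/2" unfolding e by (rule 0)
    have "v - 0 \<in> Ob z" by (rule Vf(3)[OF v(1) Vf(2)])
    then have 2: "norm (\<psi> y - \<psi> z) < \<eta>/2" unfolding Ob_def using v by simp
    have "norm (\<psi> (y - c) - \<psi> y) \<le> norm (\<psi> (y - c) - \<psi> z) + norm (\<psi> y - \<psi> z)"
      using norm_triangle_ineq4[of "\<psi> (y - c) - \<psi> z" "\<psi> y - \<psi> z"] by simp
    then show ?thesis using 1 2 by simp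
  qed
  show ?thesis
  proof (rule that[of "V0 \<inter> uminus -` V0"])
    have "open (uminus -` V0)"
      by (rule open_vimage_UNIV[OF _ oV0]) (intro continuous_intros)
    then show "open (V0 \<inter> uminus -` V0)" using oV0 by auto
    show "0 \<in> V0 \<inter> uminus -` V0" using Vf(2) by (simp add: V0_def)
    fix b z assume b: "b \<in> V0 \<inter> uminus -` V0"
    show "norm (\<psi> (z - b) - \<psi> z) < \<eta>"
    proof (cases "z \<in> T")
      case True then show ?thesis using key b by auto
    next
      case False
      show ?thesis
      proof (cases "z - b \<in> T")
        case True
        have "norm (\<psi> ((z - b) - (- b)) - \<psi> (z - b)) < \<eta>" using b by (intro key[OF True]) auto
        then show ?thesis by (simp add: norm_minus_commute)
      next
        case F2: False
        show ?thesis using supp[OF False] supp[OF F2] eta by simp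
      qed
    qed
  qed
qed

lemma schwartz_bound:
  assumes "schwartz \<phi>"
  obtains C where "C \<ge> 0" "\<And>y. (1 + norm y) ^ n * norm (\<phi> y) \<le> C"
proof -
  have "bounded (range (\<lambda>x. (1 + norm x) ^ n * norm (iter_deriv [] \<phi> x)))"
    using assms unfolding schwartz_def by (metis empty_set empty_subsetI)
  then have "bounded (range (\<lambda>x. (1 + norm x) ^ n * norm (\<phi> x)))" by simp
  then obtain C where C: "\<And>x. norm ((1 + norm x) ^ n * norm (\<phi> x)) \<le> C"
    unfolding bounded_iff by auto
  show ?thesis
  proof (rule that[of C])
    show "0 \<le> C" using C[of 0] by (meson norm_ge_zero order_trans)
    fix y show "(1 + norm y) ^ n * norm (\<phi> y) \<le> C" using C[of y] by simp
  qed
qed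

lemma schwartz_cont:
  assumes "schwartz \<phi>"
  shows "continuous_on UNIV \<phi>"
proof -
  have "\<forall>x. iter_deriv [] \<phi> differentiable (at x)"
    using assms unfolding schwartz_def by (metis empty_set empty_subsetI)
  then have "\<And>x. \<phi> differentiable (at x)" by simp
  then have "\<And>x. isCont \<phi> x" by (rule differentiable_imp_continuous_within)
  then show ?thesis by (simp add: continuous_at_imp_continuous_on)
qed

lemma schwartz_shift:
  fixes \<phi> :: "'e::euclidean_space \<Rightarrow> complex"
  assumes sch: "schwartz \<phi>" and eta: "\<eta> > 0"
  obtains \<delta> where "\<delta> > 0" "\<And>a y. norm a < \<delta> \<Longrightarrow> (1 + norm y) ^ N * norm (\<phi> (y - a) - \<phi> y) \<le> \<eta>"
proof -
  obtain C where C0: "C \<ge> 0" and C: "\<And>y. (1 + norm y) ^ Suc N * norm (\<phi> y) \<le> C"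
    using schwartz_bound[OF sch] by blast
  define R where "R = 2 ^ (N + 2) * C / \<eta>"
  have R0: "R \<ge> 0" using C0 eta by (simp add: R_def)
  have far: "(1 + norm y) ^ N * norm (\<phi> (y - a) - \<phi> y) \<le> \<eta>" if a: "norm a < 1" and y: "norm y \<ge> R" for a y
  proof -
    define u where "u = y - a"
    have "norm y \<le> norm u + norm a" unfolding u_def using norm_triangle_ineq4[of y a] norm_diff_triangle_ineq
      by (metis add.commute diff_add_cancel norm_triangle_ineq)
    then have p1: "1 + norm y \<le> 2 * (1 + norm u)" using a norm_ge_zero[of u] by (smt (verit))
    have "(1 + norm y) ^ Suc N \<le> (2 * (1 + norm u)) ^ Suc N"
      by (rule power_mono[OF p1]) simp
    also have "\<dots> = 2 ^ Suc N * (1 + norm u) ^ Suc N" by (rule power_mult_distrib)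
    finally have p2a: "(1 + norm y) ^ Suc N \<le> 2 ^ Suc N * (1 + norm u) ^ Suc N" .
    have "(1 + norm y) ^ Suc N * norm (\<phi> u) \<le> 2 ^ Suc N * ((1 + norm u) ^ Suc N * norm (\<phi> u))"
      using mult_right_mono[OF p2a norm_ge_zero[of "\<phi> u"]] by (simp only: mult.assoc)
    also have "\<dots> \<le> 2 ^ Suc N * C" using C[of u] by simp
    finally have p3: "(1 + norm y) ^ Suc N * norm (\<phi> u) \<le> 2 ^ Suc N * C" .
    have "(1 + norm y) ^ Suc N * norm (\<phi> u - \<phi> y) \<le> (1 + norm y) ^ Suc N * (norm (\<phi> u) + norm (\<phi> y))"
      by (rule mult_left_mono) (simp_all add: norm_triangle_ineq4)
    also have "\<dots> = (1 + norm y) ^ Suc N * norm (\<phi> u) + (1 + norm y) ^ Suc N * norm (\<phi> y)"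
      by (simp add: algebra_simps)
    also have "\<dots> \<le> 2 ^ Suc N * C + C" using p3 C[of y] by simp
    also have "\<dots> \<le> 2 ^ (N + 2) * C" using C0 mult_left_mono[OF one_le_power[of "2::real" N] C0] by simp
    also have "\<dots> = \<eta> * R" using eta by (simp add: R_def)
    also have "\<dots> \<le> \<eta> * (1 + norm y)" using y eta by simp
    finally have "(1 + norm y) * ((1 + norm y) ^ N * norm (\<phi> u - \<phi> y)) \<le> (1 + norm y) * \<eta>"
      by (simp add: algebra_simps)
    then show ?thesis unfolding u_def
      by (rule mult_left_le_imp_le) (simp add: add_pos_nonneg)
  qed
  have cont: "continuous_on (cball 0 (R + 1)) \<phi>"
    using schwartz_cont[OF sch] by (rule continuous_on_subset) simp
  have "uniformly_continuous_on (cball 0 (R + 1)) \<phi>"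
    by (rule compact_uniformly_continuous[OF cont compact_cball])
  moreover have e0: "\<eta> / (1 + R) ^ N > 0" using eta R0 by simp
  ultimately obtain d where d: "d > 0"
    "\<And>x x'. x \<in> cball 0 (R + 1) \<Longrightarrow> x' \<in> cball 0 (R + 1) \<Longrightarrow> dist x' x < d \<Longrightarrow>
       dist (\<phi> x') (\<phi> x) < \<eta> / (1 + R) ^ N"
    unfolding uniformly_continuous_on_def by metis
  show ?thesis
  proof (rule that[of "min 1 d"])
    show "min 1 d > 0" using d by simp
    fix a y :: 'e assume a: "norm a < min 1 d"
    show "(1 + norm y) ^ N * norm (\<phi> (y - a) - \<phi> y) \<le> \<eta>"
    proof (cases "norm y \<ge> R")
      case True then show ?thesis using far a by simp
    next
      case False
      have y1: "y \<in> cball 0 (R + 1)" using False by simp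
      have "norm (y - a) \<le> norm y + norm a" by (rule norm_triangle_ineq4)
      then have y2: "y - a \<in> cball 0 (R + 1)" using False a by simp
      have "dist (y - a) y < d" using a by (simp add: dist_norm)
      then have n1: "norm (\<phi> (y - a) - \<phi> y) \<le> \<eta> / (1 + R) ^ N"
        using d(2)[OF y1 y2] by (simp add: dist_norm)
      have n2: "(1 + norm y) ^ N \<le> (1 + R) ^ N" using False by (intro power_mono) simp_all
      have "(1 + norm y) ^ N * norm (\<phi> (y - a) - \<phi> y) \<le> (1 + R) ^ N * (\<eta> / (1 + R) ^ N)"
        by (rule mult_mono[OF n2 n1]) (use R0 in simp_all)
      also have "\<dots> = \<eta>" using R0 by simp
      finally show ?thesis .
    qed
  qed
qed

lemma cover_cballs:
  obtains A :: nat where "A \<ge> 1"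
    "\<And>j. \<exists>Cs. finite Cs \<and> card Cs \<le> A ^ j \<and> cball (0::'e::euclidean_space) (2 ^ j) \<subseteq> (\<Union>c\<in>Cs. cball c 1)"
proof -
  have cov: "cball (0::'e) 2 \<subseteq> (\<Union>c\<in>cball 0 2. ball c 1)"
  proof
    fix x :: 'e assume "x \<in> cball 0 2"
    moreover have "x \<in> ball x 1" by simp
    ultimately show "x \<in> (\<Union>c\<in>cball 0 2. ball c 1)" by blast
  qed
  obtain C0 where C0: "C0 \<subseteq> cball 0 2" "finite C0" "cball (0::'e) 2 \<subseteq> (\<Union>c\<in>C0. ball c 1)"
    by (rule compactE_image[OF compact_cball _ cov]) simp
  define A where "A = max 1 (card C0)"
  have step: "\<exists>Cs. finite Cs \<and> card Cs \<le> A ^ j \<and> cball (0::'e) (2 ^ j) \<subseteq> (\<Union>c\<in>Cs. cball c 1)" for j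
  proof (induction j)
    case 0
    show ?case by (rule exI[of _ "{0}"]) auto
  next
    case (Suc j)
    then obtain Cs where Cs: "finite Cs" "card Cs \<le> A ^ j" "cball (0::'e) (2 ^ j) \<subseteq> (\<Union>c\<in>Cs. cball c 1)"
      by blast
    define D where "D = (\<lambda>p. (2 ^ j) *\<^sub>R fst p + snd p) ` (C0 \<times> Cs)"
    have fD: "finite D" unfolding D_def using C0(2) Cs(1) by simp
    have "card D \<le> card (C0 \<times> Cs)" unfolding D_def by (rule card_image_le) (use C0(2) Cs(1) in simp)
    also have "\<dots> = card C0 * card Cs" by (rule card_cartesian_product)
    also have "\<dots> \<le> A * A ^ j" by (rule mult_mono) (use Cs(2) in \<open>simp_all add: A_def\<close>)
    finally have cD: "card D \<le> A ^ Suc j" by simp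
    have "cball (0::'e) (2 ^ Suc j) \<subseteq> (\<Union>c\<in>D. cball c 1)"
    proof
      fix y :: 'e assume y: "y \<in> cball 0 (2 ^ Suc j)"
      define y' where "y' = (1 / 2 ^ j) *\<^sub>R y"
      have "norm y' = norm y / 2 ^ j" by (simp add: y'_def)
      also have "\<dots> \<le> 2" using y by (simp add: divide_le_eq)
      finally have "y' \<in> cball 0 2" by simp
      then obtain c where c: "c \<in> C0" "y' \<in> ball c 1" using C0(3) by auto
      define z where "z = y - (2 ^ j) *\<^sub>R c"
      have zy: "z = (2 ^ j) *\<^sub>R (y' - c)" by (simp add: z_def y'_def algebra_simps)
      have "norm z = 2 ^ j * norm (y' - c)" by (simp add: zy)
      also have "\<dots> \<le> 2 ^ j * 1" using c(2) by (intro mult_left_mono) (simp_all add: dist_norm norm_minus_commute)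
      finally have "z \<in> cball 0 (2 ^ j)" by simp
      then obtain c' where c': "c' \<in> Cs" "z \<in> cball c' 1" using Cs(3) by auto
      have "(2 ^ j) *\<^sub>R c + c' \<in> D" unfolding D_def using c(1) c'(1) by (intro image_eqI[of _ _ "(c, c')"]) auto
      moreover have "y \<in> cball ((2 ^ j) *\<^sub>R c + c') 1"
        using c'(2) by (simp add: z_def dist_norm algebra_simps)
      ultimately show "y \<in> (\<Union>c\<in>D. cball c 1)" by blast
    qed
    then show ?case using fD cD by blast
  qed
  show ?thesis by (rule that[of A]) (simp add: A_def, rule step)
qed

lemma geom_le2:
  fixes q :: real
  assumes "0 \<le> q" "q \<le> 1/2"
  shows "(\<Sum>j<n. q ^ j) \<le> 2 - 2 * q ^ n"
proof (induction n)
  case 0 then show ?case by simp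
next
  case (Suc n)
  have "2 * q ^ Suc n \<le> q ^ n"
  proof -
    have "2 * q ^ Suc n = (2 * q) * q ^ n" by simp
    also have "\<dots> \<le> 1 * q ^ n" using assms by (intro mult_right_mono) simp_all
    finally show ?thesis by simp
  qed
  then show ?case using Suc by simp
qed

lemma weighted_count:
  fixes e :: "'i \<Rightarrow> 'e::euclidean_space"
  assumes A: "\<And>j. \<exists>Cs. finite Cs \<and> card Cs \<le> A ^ j \<and> cball (0::'e) (2 ^ j) \<subseteq> (\<Union>c\<in>Cs. cball c 1)"
    and cnt: "\<And>c. finite {i\<in>Y. e i \<in> cball c 1} \<and> card {i\<in>Y. e i \<in> cball c 1} \<le> M"
    and N: "2 * A \<le> 2 ^ N"
    and F: "finite F" "F \<subseteq> Y"
  shows "(\<Sum>i\<in>F. 1 / (1 + norm (e i)) ^ N) \<le> 2 * 2 ^ N * real M"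
proof -
  define Bd where "Bd = Max (insert 0 ((\<lambda>i. norm (e i)) ` F))"
  obtain J where J: "Bd < 2 ^ J" using real_arch_pow[of 2 Bd] by auto
  have eJ: "norm (e i) \<le> 2 ^ J" if "i \<in> F" for i
  proof -
    have "norm (e i) \<le> Bd" unfolding Bd_def using F(1) that by (intro Max_ge) auto
    then show ?thesis using J by simp
  qed
  define a where "a j = (2::real) ^ N / (2 ^ N) ^ j" for j
  have a0: "a j \<ge> 0" for j by (simp add: a_def)
  define P where "P i j \<longleftrightarrow> norm (e i) \<le> 2 ^ j" for i j
  have pw: "1 / (1 + norm (e i)) ^ N \<le> (\<Sum>j\<le>J. if P i j then a j else 0)" if i: "i \<in> F" for i
  proof -
    define j0 where "j0 = (LEAST j. P i j)"
    have PJ: "P i J" using eJ[OF i] by (simp add: P_def)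
    have Pj0: "P i j0" unfolding j0_def by (rule LeastI[of "P i", OF PJ])
    have j0J: "j0 \<le> J" unfolding j0_def by (rule Least_le[of "P i", OF PJ])
    have le1: "1 / (1 + norm (e i)) ^ N \<le> a j0"
    proof (cases j0)
      case 0
      have "1 / (1 + norm (e i)) ^ N \<le> 1" using zero_less_power[of "1 + norm (e i)" N] one_le_power[of "1 + norm (e i)" N] by (simp add: divide_le_eq_1 add_pos_nonneg)
      also have "(1::real) \<le> 2 ^ N" by simp
      finally show ?thesis using 0 by (simp add: a_def)
    next
      case (Suc k)
      have "\<not> P i k" unfolding j0_def by (rule not_less_Least) (use Suc in \<open>simp add: j0_def[symmetric]\<close>)
      then have nk: "2 ^ k < norm (e i)" by (simp add: P_def)
      have "(2 ^ k) ^ N \<le> (1 + norm (e i)) ^ N" using nk by (intro power_mono) simp_all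
      then have "1 / (1 + norm (e i)) ^ N \<le> 1 / (2 ^ k) ^ N"
        by (intro divide_left_mono) (simp_all add: add_pos_nonneg)
      also have "\<dots> = a j0" unfolding a_def Suc by (simp add: power_mult[symmetric] mult.commute)
      finally show ?thesis .
    qed
    also have "a j0 = (if P i j0 then a j0 else 0)" using Pj0 by simp
    also have "\<dots> \<le> (\<Sum>j\<le>J. if P i j then a j else 0)"
      by (rule member_le_sum[where f = "\<lambda>j. if P i j then a j else 0"]) (simp_all add: j0J a0)
    finally show ?thesis .
  qed
  have cntj: "(\<Sum>i\<in>F. if P i j then a j else 0) \<le> a j * (real M * real A ^ j)" for j
  proof -
    obtain Cs where Cs: "finite Cs" "card Cs \<le> A ^ j" "cball (0::'e) (2 ^ j) \<subseteq> (\<Union>c\<in>Cs. cball c 1)"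
      using A by blast
    have sub: "{i\<in>F. P i j} \<subseteq> (\<Union>c\<in>Cs. {i\<in>Y. e i \<in> cball c 1})"
    proof
      fix i assume "i \<in> {i\<in>F. P i j}"
      then have i: "i \<in> F" "e i \<in> cball 0 (2 ^ j)" by (auto simp: P_def)
      then obtain c where c: "c \<in> Cs" "e i \<in> cball c 1" using Cs(3) by auto
      have "i \<in> Y" using i(1) F(2) by auto
      then show "i \<in> (\<Union>c\<in>Cs. {i\<in>Y. e i \<in> cball c 1})" using c by auto
    qed
    have fin: "finite (\<Union>c\<in>Cs. {i\<in>Y. e i \<in> cball c 1})"
      by (rule finite_UN_I[OF Cs(1)]) (use cnt in simp)
    have "card {i\<in>F. P i j} \<le> card (\<Union>c\<in>Cs. {i\<in>Y. e i \<in> cball c 1})"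
      by (rule card_mono[OF fin sub])
    also have "\<dots> \<le> (\<Sum>c\<in>Cs. card {i\<in>Y. e i \<in> cball c 1})" by (rule card_UN_le[OF Cs(1)])
    also have "\<dots> \<le> (\<Sum>c\<in>Cs. M)" by (rule sum_mono) (use cnt in simp)
    also have "\<dots> = card Cs * M" by simp
    also have "\<dots> \<le> A ^ j * M" using Cs(2) by simp
    finally have "real (card {i\<in>F. P i j}) \<le> real (A ^ j * M)" by (simp only: of_nat_le_iff)
    then have c: "real (card {i\<in>F. P i j}) \<le> real M * real A ^ j" by (simp add: mult.commute)
    have "(\<Sum>i\<in>F. if P i j then a j else 0) = (\<Sum>i\<in>{i\<in>F. P i j}. a j)"
      by (rule sum.inter_filter[symmetric, OF F(1)])
    also have "\<dots> = a j * real (card {i\<in>F. P i j})" by simp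
    also have "\<dots> \<le> a j * (real M * real A ^ j)" by (rule mult_left_mono[OF c a0])
    finally show ?thesis .
  qed
  define q where "q = real A / 2 ^ N"
  have q0: "0 \<le> q" unfolding q_def by simp
  have "real (2 * A) \<le> real (2 ^ N)" using N by (simp only: of_nat_le_iff)
  then have "2 * real A \<le> 2 ^ N" by simp
  then have q2: "q \<le> 1/2" unfolding q_def by (simp add: divide_le_eq)
  have "(\<Sum>i\<in>F. 1 / (1 + norm (e i)) ^ N) \<le> (\<Sum>i\<in>F. \<Sum>j\<le>J. if P i j then a j else 0)"
    by (rule sum_mono) (rule pw)
  also have "\<dots> = (\<Sum>j\<le>J. \<Sum>i\<in>F. if P i j then a j else 0)" by (rule sum.swap)
  also have "\<dots> \<le> (\<Sum>j\<le>J. a j * (real M * real A ^ j))" by (rule sum_mono) (rule cntj)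
  also have "\<dots> = (\<Sum>j\<le>J. 2 ^ N * real M * q ^ j)"
    by (rule sum.cong) (simp_all add: a_def q_def power_divide)
  also have "\<dots> = 2 ^ N * real M * (\<Sum>j<Suc J. q ^ j)" by (simp add: sum_distrib_left lessThan_Suc_atMost)
  also have "\<dots> \<le> 2 ^ N * real M * 2"
  proof (rule mult_left_mono)
    have "(\<Sum>j<Suc J. q ^ j) \<le> 2 - 2 * q ^ Suc J" by (rule geom_le2[OF q0 q2])
    also have "\<dots> \<le> 2" using q0 by simp
    finally show "(\<Sum>j<Suc J. q ^ j) \<le> 2" .
  qed simp
  finally show ?thesis by simp
qed

lemma rel_dense_window:
  fixes L :: "('g::topological_ab_group_add \<times> 'k::{topological_space, ab_group_add}) set"
  assumes cp: "cut_and_project L"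
    and cm1: "\<And>w. continuous_on UNIV (\<lambda>u::'k. w - u)"
    and cm2: "\<And>w. continuous_on UNIV (\<lambda>u::'k. u - w)"
    and W: "open W" "0 \<in> W"
  shows "relatively_dense {fst l | l. l \<in> L \<and> snd l \<in> W}"
proof -
  have sub: "\<And>x y. x \<in> L \<Longrightarrow> y \<in> L \<Longrightarrow> x - y \<in> L" and L0: "0 \<in> L"
    and dense: "closure (snd ` L) = UNIV" using cp unfolding cut_and_project_def by auto
  obtain C where C: "compact C" "(\<Union>l\<in>L. (\<lambda>c. l + c) ` C) = UNIV"
    using cp unfolding cut_and_project_def by auto
  define Ow where "Ow l = (\<lambda>w. snd l - w) -` W" for l :: "'g \<times> 'k"
  have oOw: "open (Ow l)" for l unfolding Ow_def by (rule open_vimage_UNIV[OF cm1 W(1)])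
  have cov: "snd ` C \<subseteq> (\<Union>l\<in>L. Ow l)"
  proof
    fix w assume "w \<in> snd ` C"
    have oO: "open ((\<lambda>u. u - w) -` W)" by (rule open_vimage_UNIV[OF cm2 W(1)])
    have "w \<in> (\<lambda>u. u - w) -` W" using W(2) by simp
    then have "w \<in> (\<lambda>u. u - w) -` W \<inter> closure (snd ` L)" using dense by simp
    then have "(\<lambda>u. u - w) -` W \<inter> closure (snd ` L) \<noteq> {}" by (rule ex_in_conv[THEN iffD1, OF exI])
    then have "(\<lambda>u. u - w) -` W \<inter> snd ` L \<noteq> {}" using open_Int_closure_eq_empty[OF oO] by simp
    then obtain l where l: "l \<in> L" "snd l - w \<in> W" by auto
    then have "w \<in> Ow l" by (simp add: Ow_def)
    then show "w \<in> (\<Union>l\<in>L. Ow l)" using l(1) by auto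
  qed
  have cC: "compact (snd ` C)" by (rule compact_continuous_image[OF continuous_on_snd[OF continuous_on_id] C(1)])
  obtain Lf where Lf: "Lf \<subseteq> L" "finite Lf" "snd ` C \<subseteq> (\<Union>l\<in>Lf. Ow l)"
    by (rule compactE_image[OF cC _ cov]) (rule oOw)
  define C' where "C' = (\<Union>l'\<in>Lf. (\<lambda>c. fst c - fst l') ` C)"
  have cC': "compact C'" unfolding C'_def
  proof (rule compact_UN[OF Lf(2)])
    fix l' :: "'g \<times> 'k"
    have "continuous_on C (\<lambda>c. fst c - fst l')" by (intro continuous_intros)
    then show "compact ((\<lambda>c. fst c - fst l') ` C)" by (rule compact_continuous_image[OF _ C(1)])
  qed
  show ?thesis unfolding relatively_dense_def
  proof (intro exI conjI)
    show "compact C'" by (rule cC')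
    show "(\<Union>p\<in>{fst l |l. l \<in> L \<and> snd l \<in> W}. (+) p ` C') = UNIV"
    proof (rule set_eqI, rule iffI)
      fix g :: 'g
      assume "g \<in> UNIV"
      have "(g, 0) \<in> (\<Union>l\<in>L. (\<lambda>c. l + c) ` C)" using C(2) by simp
      then obtain l c where lc: "l \<in> L" "c \<in> C" "(g, 0) = l + c" by auto
      have "snd c \<in> snd ` C" using lc(2) by simp
      then obtain l' where l': "l' \<in> Lf" "snd c \<in> Ow l'" using Lf(3) by auto
      have l'L: "l' \<in> L" using l'(1) Lf(1) by auto
      define p where "p = l + l'"
      have "p = l - (0 - l')" by (simp add: p_def)
      then have pL: "p \<in> L" using sub[OF lc(1) sub[OF L0 l'L]] by simp
      have "snd (g, 0::'k) = snd (l + c)" using lc(3) by (rule arg_cong)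
      then have "snd l + snd c = 0" by simp
      then have sl: "snd l = - snd c" by (simp add: eq_neg_iff_add_eq_0)
      have "snd p = snd l' - snd c" using sl by (simp add: p_def)
      then have pW: "snd p \<in> W" using l'(2) by (simp add: Ow_def)
      have "fst (g, 0::'k) = fst (l + c)" using lc(3) by (rule arg_cong)
      then have gf: "g = fst l + fst c" by simp
      have "g = fst p + (fst c - fst l')" using gf by (simp add: p_def algebra_simps)
      moreover have "fst c - fst l' \<in> C'" unfolding C'_def using l'(1) lc(2) by auto
      ultimately have "g \<in> (+) (fst p) ` C'" by auto
      moreover have "fst p \<in> {fst l |l. l \<in> L \<and> snd l \<in> W}" using pL pW by (intro CollectI exI[of _ p]) simp
      ultimately show "g \<in> (\<Union>p\<in>{fst l |l. l \<in> L \<and> snd l \<in> W}. (+) p ` C')" by auto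
    qed simp
  qed
qed

lemma lc_nbhd:
  fixes x :: "'a::topological_space"
  assumes "locally compact (UNIV :: 'a::topological_space set)"
  obtains u v where "open u" "compact v" "x \<in> u" "u \<subseteq> v"
proof -
  have o: "openin (top_of_set (UNIV::'a set)) UNIV \<and> x \<in> UNIV" by simp
  have "\<exists>U V. openin (top_of_set UNIV) U \<and> compact V \<and> x \<in> U \<and> U \<subseteq> V \<and> V \<subseteq> UNIV"
    using assms[unfolded locally_def, rule_format, OF o] .
  then obtain U V where UV: "openin (top_of_set (UNIV::'a set)) U" "compact V" "x \<in> U" "U \<subseteq> V"
    by (elim exE conjE)
  have "open U" using UV(1) by (simp only: subtopology_UNIV open_openin)
  then show ?thesis by (rule that[OF _ UV(2-4)])
qed

lemma rd_mono:
  assumes "relatively_dense P" "P \<subseteq> P'"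
  shows "relatively_dense P'"
proof -
  obtain C where C: "compact C" "(\<Union>p\<in>P. (\<lambda>c. p + c) ` C) = UNIV"
    using assms(1) unfolding relatively_dense_def by blast
  have "(\<Union>p\<in>P'. (\<lambda>c. p + c) ` C) = UNIV"
  proof -
    have "(\<Union>p\<in>P. (\<lambda>c. p + c) ` C) \<subseteq> (\<Union>p\<in>P'. (\<lambda>c. p + c) ` C)"
      using assms(2) by (rule UN_mono) simp
    then show ?thesis using C(2) by auto
  qed
  then show ?thesis unfolding relatively_dense_def using C(1) by blast
qed

lemma triple_diff_cont:
  "continuous_on UNIV (\<lambda>z::('a::topological_group_add \<times> ('b::topological_group_add \<times> 'c::topological_group_add))
     \<times> ('a \<times> ('b \<times> 'c)). fst z - snd z)"
proof -
  have eq: "(\<lambda>z::('a \<times> ('b \<times> 'c)) \<times> ('a \<times> ('b \<times> 'c)). fst z - snd z) =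
    (\<lambda>z. (fst (fst z) - fst (snd z), (fst (snd (fst z)) - fst (snd (snd z)), snd (snd (fst z)) - snd (snd (snd z)))))"
    by (simp add: fun_eq_iff prod_eq_iff)
  show ?thesis unfolding eq by (intro continuous_intros)
qed

lemma pair_minus_cont1:
  "continuous_on UNIV (\<lambda>u::('b::topological_group_add \<times> 'c::topological_group_add). w - u)"
proof -
  have eq: "(\<lambda>u::'b \<times> 'c. w - u) = (\<lambda>u. (fst w - fst u, snd w - snd u))" by (simp add: fun_eq_iff prod_eq_iff)
  show ?thesis unfolding eq by (intro continuous_intros)
qed

lemma pair_minus_cont2:
  "continuous_on UNIV (\<lambda>u::('b::topological_group_add \<times> 'c::topological_group_add). u - w)"
proof -
  have eq: "(\<lambda>u::'b \<times> 'c. u - w) = (\<lambda>u. (fst u - fst w, snd u - snd w))" by (simp add: fun_eq_iff prod_eq_iff)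
  show ?thesis unfolding eq by (intro continuous_intros)
qed

lemma star_map_eq:
  assumes "inj_on fst L" "l \<in> L"
  shows "star_map L (fst l) = snd l"
  unfolding star_map_def
proof (rule the_equality)
  show "(fst l, snd l) \<in> L" using assms(2) by simp
  fix y assume y: "(fst l, y) \<in> L"
  have "(fst l, y) = l" by (rule inj_onD[OF assms(1) _ y assms(2)]) simp
  then have "snd (fst l, y) = snd l" by (rule arg_cong)
  then show "y = snd l" by simp
qed

lemma Knorm_le:
  assumes "\<And>s F. finite F \<Longrightarrow> F \<subseteq> (\<lambda>k. s + k) ` K \<Longrightarrow> (\<Sum>x\<in>F. norm (c x)) \<le> r"
  shows "pp_Knorm K c \<le> ennreal r"
  unfolding pp_Knorm_def
proof (rule SUP_least)
  fix s
  show "pp_variation c ((\<lambda>k. s + k) ` K) \<le> ennreal r"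
    unfolding pp_variation_def
  proof (rule infsum_le_finite_sums)
    show "(\<lambda>x. ennreal (norm (c x))) summable_on (\<lambda>k. s + k) ` K"
      by (rule nonneg_summable_on_complete) simp
    fix F assume F: "finite F" "F \<subseteq> (\<lambda>k. s + k) ` K"
    have "(\<Sum>x\<in>F. ennreal (norm (c x))) = ennreal (\<Sum>x\<in>F. norm (c x))" by simp
    also have "\<dots> \<le> ennreal r" by (rule ennreal_leI[OF assms[OF F]])
    finally show "(\<Sum>x\<in>F. ennreal (norm (c x))) \<le> ennreal r" .
  qed
qed

lemma omega_diff_out:
  fixes L :: "('g::ab_group_add \<times> 'k::ab_group_add) set"
  assumes sub: "\<And>x y. x \<in> L \<Longrightarrow> y \<in> L \<Longrightarrow> x - y \<in> L" and L0: "0 \<in> L"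
    and lt: "lt \<in> L" and y: "y \<notin> fst ` L"
  shows "omega L h (y - fst lt) - omega L h y = 0"
proof -
  have "y - fst lt \<notin> fst ` L"
  proof
    assume "y - fst lt \<in> fst ` L"
    then obtain m where m: "m \<in> L" "y - fst lt = fst m" by auto
    have "m - (0 - lt) \<in> L" using sub[OF m(1) sub[OF L0 lt]] .
    moreover have "fst (m - (0 - lt)) = y" using m(2) by (simp add: algebra_simps)
    ultimately have "y \<in> fst ` L" by (rule rev_image_eqI[OF _ sym])
    then show False using y by simp
  qed
  then show ?thesis using y by (simp add: omega_def)
qed

lemma omega_diff_in:
  fixes L :: "('g::ab_group_add \<times> 'k::ab_group_add) set"
  assumes sub: "\<And>x y. x \<in> L \<Longrightarrow> y \<in> L \<Longrightarrow> x - y \<in> L" and inj: "inj_on fst L"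
    and lt: "lt \<in> L" and l: "l \<in> L"
  shows "omega L h (fst l - fst lt) - omega L h (fst l) = h (snd l - snd lt) - h (snd l)"
proof -
  have m: "l - lt \<in> L" by (rule sub[OF l lt])
  have "fst l - fst lt = fst (l - lt)" by simp
  moreover have "fst (l - lt) \<in> fst ` L" using m by (rule imageI)
  ultimately have "omega L h (fst l - fst lt) = h (star_map L (fst (l - lt)))" by (simp add: omega_def)
  also have "\<dots> = h (snd l - snd lt)" using star_map_eq[OF inj m] by simp
  finally have "omega L h (fst l - fst lt) = h (snd l - snd lt)" .
  moreover have "omega L h (fst l) = h (snd l)"
    using star_map_eq[OF inj l] l by (simp add: omega_def)
  ultimately show ?thesis by simp
qed

lemma term_bound:
  fixes \<phi> :: "'e::real_normed_vector \<Rightarrow> complex" and \<psi> :: "'h::ab_group_add \<Rightarrow> complex"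
  assumes sh: "(1 + norm y) ^ N * norm (\<phi> (y - a) - \<phi> y) \<le> \<eta>1"
    and Cp: "(1 + norm y) ^ N * norm (\<phi> y) \<le> Cp"
    and P: "\<And>z. norm (\<psi> z) \<le> P"
    and ps: "norm (\<psi> (z - b) - \<psi> z) < \<eta>2"
  shows "norm (\<phi> (y - a) * \<psi> (z - b) - \<phi> y * \<psi> z) \<le> (\<eta>1 * P + Cp * \<eta>2) / (1 + norm y) ^ N"
proof -
  have pos: "(1 + norm y) ^ N > 0" by (simp add: add_pos_nonneg)
  have d1: "norm (\<phi> (y - a) - \<phi> y) \<le> \<eta>1 / (1 + norm y) ^ N"
    using sh pos by (simp add: pos_le_divide_eq mult.commute)
  have d2: "norm (\<phi> y) \<le> Cp / (1 + norm y) ^ N"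
    using Cp pos by (simp add: pos_le_divide_eq mult.commute)
  have "\<phi> (y - a) * \<psi> (z - b) - \<phi> y * \<psi> z = (\<phi> (y - a) - \<phi> y) * \<psi> (z - b) + \<phi> y * (\<psi> (z - b) - \<psi> z)"
    by (simp add: algebra_simps)
  then have "norm (\<phi> (y - a) * \<psi> (z - b) - \<phi> y * \<psi> z) \<le>
     norm (\<phi> (y - a) - \<phi> y) * norm (\<psi> (z - b)) + norm (\<phi> y) * norm (\<psi> (z - b) - \<psi> z)"
    by (metis norm_mult norm_triangle_ineq)
  also have "\<dots> \<le> (\<eta>1 / (1 + norm y) ^ N) * P + (Cp / (1 + norm y) ^ N) * \<eta>2"
  proof (rule add_mono)
    show "norm (\<phi> (y - a) - \<phi> y) * norm (\<psi> (z - b)) \<le> \<eta>1 / (1 + norm y) ^ N * P"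
      by (rule mult_mono[OF d1 P]) (simp_all add: order_trans[OF _ d1])
    show "norm (\<phi> y) * norm (\<psi> (z - b) - \<psi> z) \<le> Cp / (1 + norm y) ^ N * \<eta>2"
      by (rule mult_mono[OF d2 less_imp_le[OF ps]]) (simp_all add: order_trans[OF _ d2])
  qed
  also have "\<dots> = (\<eta>1 * P + Cp * \<eta>2) / (1 + norm y) ^ N" by (simp add: add_divide_distrib)
  finally show ?thesis .
qed

lemma quarter_cancel: "(x::real) > 0 \<Longrightarrow> e / (4 * x) * x = e / 4"
  by (simp add: field_simps)

theorem lemma5p3:
  fixes L :: "('g::{topological_ab_group_add, t2_space} \<times>
               ('e::euclidean_space \<times> 'h::{topological_ab_group_add, t2_space})) set"
    and \<phi> :: "'e \<Rightarrow> complex" and \<psi> :: "'h \<Rightarrow> complex"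
  assumes "locally compact (UNIV :: 'g set)"
    and "locally compact (UNIV :: 'h set)"
    and "cut_and_project L"
    and "schwartz \<phi>"
    and "Cc \<psi>"
  shows "norm_almost_periodic (omega L (\<lambda>(y, z). \<phi> y * \<psi> z))"
proof -
  define h where "h = (\<lambda>(y, z). \<phi> y * \<psi> z)"
  define \<omega> where "\<omega> = omega L h"
  have sub: "\<And>x y. x \<in> L \<Longrightarrow> y \<in> L \<Longrightarrow> x - y \<in> L" and L0: "0 \<in> L"
    and inj: "inj_on fst L" using assms(3) unfolding cut_and_project_def by auto
  obtain U where U: "open U" "0 \<in> U" "L \<inter> U = {0}" using assms(3) unfolding cut_and_project_def by auto
  define T where "T = closure {x. \<psi> x \<noteq> 0}"
  have cT: "compact T" and contpsi: "continuous_on UNIV \<psi>" using assms(5) unfolding Cc_def T_def by simp_all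
  have suppT: "{x. \<psi> x \<noteq> 0} \<subseteq> T" unfolding T_def by (rule closure_subset)
  have supp: "\<psi> x = 0" if "x \<notin> T" for x using that suppT by auto
  obtain P where P0: "P \<ge> 0" and P: "\<And>z. norm (\<psi> z) \<le> P"
  proof -
    have "compact (\<psi> ` T)" by (rule compact_continuous_image[OF continuous_on_subset[OF contpsi] cT]) simp
    then obtain P where P: "\<And>w. w \<in> \<psi> ` T \<Longrightarrow> norm w \<le> P"
      using compact_imp_bounded bounded_iff by metis
    show ?thesis
    proof (rule that[of "max 0 P"])
      show "0 \<le> max 0 P" by simp
      fix z show "norm (\<psi> z) \<le> max 0 P"
      proof (cases "z \<in> T")
        case True then show ?thesis using P[of "\<psi> z"] by simp
      next
        case False then show ?thesis using supp by simp
      qed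
    qed
  qed
  obtain u v :: "'h set" where uv: "open u" "compact v" "0 \<in> u" "u \<subseteq> v" by (rule lc_nbhd[OF assms(2), where x=0])
  define S where "S = T \<union> (\<lambda>p. fst p + snd p) ` (T \<times> v)"
  have cS: "compact S" unfolding S_def
  proof (rule compact_Un[OF cT])
    have "continuous_on (T \<times> v) (\<lambda>p::'h \<times> 'h. fst p + snd p)" by (intro continuous_intros)
    then show "compact ((\<lambda>p. fst p + snd p) ` (T \<times> v))"
      by (rule compact_continuous_image[OF _ compact_Times[OF cT uv(2)]])
  qed
  have hfold: "(\<lambda>(y, z). \<phi> y * \<psi> z) = h" by (simp add: h_def)
  show ?thesis unfolding norm_almost_periodic_def hfold
  proof (intro allI impI)
    fix K :: "'g set" and \<epsilon> :: real
    assume K: "compact K \<and> interior K \<noteq> {}" and eps: "\<epsilon> > 0"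
    define Q where "Q = K \<times> (cball (0::'e) 1 \<times> S)"
    have cQ: "compact Q" unfolding Q_def using K cS by (intro compact_Times) simp_all
    obtain M where M: "\<And>x. finite (L \<inter> (+) x ` Q) \<and> card (L \<inter> (+) x ` Q) \<le> M"
      using uniform_finite[OF triple_diff_cont sub U cQ] by metis
    obtain A :: nat where A1: "A \<ge> 1"
      and A: "\<And>j. \<exists>Cs. finite Cs \<and> card Cs \<le> A ^ j \<and> cball (0::'e) (2 ^ j) \<subseteq> (\<Union>c\<in>Cs. cball c 1)"
      using cover_cballs[where 'e='e] by metis
    define N where "N = A + 1"
    have N: "2 * A \<le> 2 ^ N"
    proof -
      have "A < 2 ^ A" by (rule less_exp)
      then show ?thesis by (simp add: N_def)
    qed
    obtain Cp where Cp0: "Cp \<ge> 0" and Cp: "\<And>y. (1 + norm y) ^ N * norm (\<phi> y) \<le> Cp"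
      using schwartz_bound[OF assms(4), of N] by metis
    define B where "B = 2 * 2 ^ N * real M"
    have B0: "B \<ge> 0" by (simp add: B_def)
    define \<eta>1 where "\<eta>1 = \<epsilon> / (4 * (P + 1) * (B + 1))"
    define \<eta>2 where "\<eta>2 = \<epsilon> / (4 * (Cp + 1) * (B + 1))"
    have e1: "\<eta>1 > 0" unfolding \<eta>1_def using eps P0 B0 by (simp add: add_pos_nonneg)
    have e2: "\<eta>2 > 0" unfolding \<eta>2_def using eps Cp0 B0 by (simp add: add_pos_nonneg)
    obtain \<delta> where d0: "\<delta> > 0"
      and d: "\<And>a y. norm a < \<delta> \<Longrightarrow> (1 + norm y) ^ N * norm (\<phi> (y - a) - \<phi> y) \<le> \<eta>1"
      using schwartz_shift[OF assms(4) e1, where N=N] by metis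
    obtain V2 where V2: "open V2" "0 \<in> V2" "\<And>b z. b \<in> V2 \<Longrightarrow> norm (\<psi> (z - b) - \<psi> z) < \<eta>2"
      using unif_cont_Cc[OF assms(5) e2] by metis
    define W where "W = ball (0::'e) \<delta> \<times> (V2 \<inter> u)"
    have oW: "open W" unfolding W_def using V2(1) uv(1) by (intro open_Times) auto
    have W0: "0 \<in> W" unfolding W_def using V2(2) uv(3) d0 by (simp add: zero_prod_def)
    have RD: "relatively_dense {fst l |l. l \<in> L \<and> snd l \<in> W}"
      by (rule rel_dense_window[OF assms(3) pair_minus_cont1 pair_minus_cont2 oW W0])
    show "relatively_dense {t. pp_Knorm K (\<lambda>y. pp_translate t (omega L h) y - omega L h y) < ennreal \<epsilon>}"
    proof (rule rd_mono[OF RD], rule subsetI)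
      fix t assume "t \<in> {fst l |l. l \<in> L \<and> snd l \<in> W}"
      then obtain lt where lt: "lt \<in> L" "snd lt \<in> W" "t = fst lt" by auto
      define a where "a = fst (snd lt)"
      define b where "b = snd (snd lt)"
      have a: "norm a < \<delta>" and b: "b \<in> V2" "b \<in> u" using lt(2) unfolding W_def a_def b_def
        by (auto simp: mem_Times_iff)
      define \<beta> where "\<beta> = \<eta>1 * P + Cp * \<eta>2"
      have \<beta>0: "\<beta> \<ge> 0" unfolding \<beta>_def using e1 e2 P0 Cp0 by simp
      have \<beta>B: "\<beta> * B \<le> \<epsilon> / 2"
      proof -
        have P1: "P + 1 > 0" and B1: "B + 1 > 0" and C1: "Cp + 1 > 0" using P0 B0 Cp0 by simp_all
        have PB: "P * B \<le> (P + 1) * (B + 1)" using P0 B0 by (simp add: algebra_simps)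
        have CB: "Cp * B \<le> (Cp + 1) * (B + 1)" using Cp0 B0 by (simp add: algebra_simps)
        have "\<eta>1 * (P * B) \<le> \<eta>1 * ((P + 1) * (B + 1))" using PB e1 by (intro mult_left_mono) simp_all
        also have "\<dots> = \<epsilon> / 4" unfolding \<eta>1_def mult.assoc[of 4] by (rule quarter_cancel) (use P1 B1 in simp)
        finally have 1: "\<eta>1 * (P * B) \<le> \<epsilon> / 4" .
        have "\<eta>2 * (Cp * B) \<le> \<eta>2 * ((Cp + 1) * (B + 1))" using CB e2 by (intro mult_left_mono) simp_all
        also have "\<dots> = \<epsilon> / 4" unfolding \<eta>2_def mult.assoc[of 4] by (rule quarter_cancel) (use C1 B1 in simp)
        finally have 2: "\<eta>2 * (Cp * B) \<le> \<epsilon> / 4" .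
        have "\<beta> * B = \<eta>1 * (P * B) + \<eta>2 * (Cp * B)" unfolding \<beta>_def by (simp add: algebra_simps)
        then show ?thesis using 1 2 by simp
      qed
      have "pp_Knorm K (\<lambda>y. pp_translate t (omega L h) y - omega L h y) \<le> ennreal (\<epsilon> / 2)"
      proof (rule Knorm_le)
        fix s F assume F: "finite F" "F \<subseteq> (\<lambda>k. s + k) ` K"
        define c where "c y = pp_translate t (omega L h) y - omega L h y" for y
        have c_out: "c y = 0" if yL: "y \<notin> fst ` L" for y
          unfolding c_def pp_translate_def lt(3) by (rule omega_diff_out[OF sub L0 lt(1) yL])
        have c_in: "c (fst l) = h (snd l - snd lt) - h (snd l)" if lL: "l \<in> L" for l
          unfolding c_def pp_translate_def lt(3) by (rule omega_diff_in[OF sub inj lt(1) lL])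
        define F' where "F' = {l \<in> L. fst l \<in> F}"
        have injF': "inj_on fst F'" by (rule inj_on_subset[OF inj]) (auto simp: F'_def)
        have imF': "fst ` F' = F \<inter> fst ` L" by (auto simp: F'_def)
        have finF': "finite F'"
        proof (rule finite_imageD[OF _ injF'])
          show "finite (fst ` F')" unfolding imF' using F(1) by simp
        qed
        have "(\<Sum>x\<in>F. norm (c x)) = (\<Sum>x\<in>F \<inter> fst ` L. norm (c x))"
          by (rule sum.mono_neutral_right[OF F(1)]) (auto simp: c_out)
        also have "\<dots> = (\<Sum>l\<in>F'. norm (c (fst l)))"
          unfolding imF'[symmetric] using sum.reindex[OF injF', of "\<lambda>x. norm (c x)"] by (simp add: o_def)
        also have "\<dots> \<le> (\<Sum>l\<in>F'. if snd (snd l) \<in> S then \<beta> / (1 + norm (fst (snd l))) ^ N else 0)"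
        proof (rule sum_mono)
          fix l assume l: "l \<in> F'"
          then have lL: "l \<in> L" by (simp add: F'_def)
          define y where "y = fst (snd l)"
          define z where "z = snd (snd l)"
          have eq: "c (fst l) = \<phi> (y - a) * \<psi> (z - b) - \<phi> y * \<psi> z"
            using c_in[OF lL] by (simp add: h_def y_def z_def a_def b_def case_prod_unfold)
          show "norm (c (fst l)) \<le> (if snd (snd l) \<in> S then \<beta> / (1 + norm (fst (snd l))) ^ N else 0)"
          proof (cases "z \<in> S")
            case True
            have "norm (c (fst l)) \<le> (\<eta>1 * P + Cp * \<eta>2) / (1 + norm y) ^ N"
              unfolding eq by (rule term_bound[OF d[OF a, of y] Cp[of y] P V2(3)[OF b(1), of z]])
            then show ?thesis using True by (simp add: \<beta>_def y_def z_def)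
          next
            case False
            have zT: "z \<notin> T" using False by (auto simp: S_def)
            have zbT: "z - b \<notin> T"
            proof
              assume "z - b \<in> T"
              moreover have "b \<in> v" using b(2) uv(4) by auto
              ultimately have "(z - b, b) \<in> T \<times> v" by simp
              then have "fst (z - b, b) + snd (z - b, b) \<in> (\<lambda>p. fst p + snd p) ` (T \<times> v)" by (rule imageI)
              then have "z \<in> S" by (simp add: S_def)
              then show False using False by simp
            qed
            have "c (fst l) = 0" unfolding eq using supp[OF zT] supp[OF zbT] by simp
            then show ?thesis using False by (simp add: z_def)
          qed
        qed
        also have "\<dots> = (\<Sum>l\<in>{l\<in>F'. snd (snd l) \<in> S}. \<beta> / (1 + norm (fst (snd l))) ^ N)"
          by (rule sum.inter_filter[symmetric, OF finF'])
        also have "\<dots> = \<beta> * (\<Sum>l\<in>{l\<in>F'. snd (snd l) \<in> S}. 1 / (1 + norm (fst (snd l))) ^ N)"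
          by (simp add: sum_distrib_left)
        also have "\<dots> \<le> \<beta> * B"
        proof (rule mult_left_mono[OF _ \<beta>0])
          define Y where "Y = {l \<in> L. fst l \<in> (\<lambda>k. s + k) ` K \<and> snd (snd l) \<in> S}"
          have cnt: "finite {i\<in>Y. fst (snd i) \<in> cball c0 1} \<and> card {i\<in>Y. fst (snd i) \<in> cball c0 1} \<le> M" for c0
          proof -
            have subZ: "{i\<in>Y. fst (snd i) \<in> cball c0 1} \<subseteq> L \<inter> (+) (s, (c0, 0)) ` Q"
            proof
              fix i assume i: "i \<in> {i\<in>Y. fst (snd i) \<in> cball c0 1}"
              then have iL: "i \<in> L" and iK: "fst i \<in> (\<lambda>k. s + k) ` K" and iS: "snd (snd i) \<in> S"
                and ic: "dist c0 (fst (snd i)) \<le> 1" by (auto simp: Y_def)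
              obtain k where k: "k \<in> K" "fst i = s + k" using iK by auto
              have "(k, (fst (snd i) - c0, snd (snd i))) \<in> Q"
                unfolding Q_def using k(1) iS ic by (simp add: dist_norm norm_minus_commute)
              moreover have "i = (s, (c0, 0)) + (k, (fst (snd i) - c0, snd (snd i)))"
                using k(2) by (simp add: prod_eq_iff)
              ultimately have "i \<in> (+) (s, (c0, 0)) ` Q" by (rule rev_image_eqI)
              then show "i \<in> L \<inter> (+) (s, (c0, 0)) ` Q" using iL by simp
            qed
            have "finite (L \<inter> (+) (s, (c0, 0)) ` Q)" using M by simp
            moreover have "card (L \<inter> (+) (s, (c0, 0)) ` Q) \<le> M" using M by simp
            ultimately show ?thesis using subZ by (meson card_mono finite_subset order_trans)
          qed
          have finS: "finite {l\<in>F'. snd (snd l) \<in> S}" using finF' by simp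
          have subY: "{l\<in>F'. snd (snd l) \<in> S} \<subseteq> Y" using F(2) by (auto simp: F'_def Y_def)
          show "(\<Sum>l\<in>{l\<in>F'. snd (snd l) \<in> S}. 1 / (1 + norm (fst (snd l))) ^ N) \<le> B"
            unfolding B_def by (rule weighted_count[OF A cnt N finS subY])
        qed
        also have "\<dots> \<le> \<epsilon> / 2" by (rule \<beta>B)
        finally show "(\<Sum>x\<in>F. norm (c x)) \<le> \<epsilon> / 2" .
      qed
      also have "\<dots> < ennreal \<epsilon>" using eps by (simp add: ennreal_less_iff)
      finally show "t \<in> {t. pp_Knorm K (\<lambda>y. pp_translate t (omega L h) y - omega L h y) < ennreal \<epsilon>}"
        by simp
    qed
  qed
qed

end
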